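(* Let $H:[0,1]\times\mathbb R\to\mathbb R$ be continuous, coercive in $p$, and quasiconvex in $p$ with $\mathrm{Int}\{p: H(s,p)\le b\}=\{p:H(s,p)<b\}$ for all $s,b$. Let $a_H=\max_s\min_pH(s,p)$ and let $c_H$ be the minimum of those $a\in\mathbb R$ for which $H(s,u')=a$ admits a viscosity subsolution $u$ in $(0,1)$, continuous on $[0,1]$, with $u(0)=u(1)$ (a periodic subsolution). Assume that either $c_H>a_H$, or $s\mapsto\min_pH(s,p)$ is constant on $[0,1]$. With $\sigma^\pm_{c_H}(s)$ the largest/smallest $p$ with $H(s,p)=c_H$, one has $$\min\Big\{-\int_0^1\sigma^-_{c_H}(t)\,dt,\ \int_0^1\sigma^+_{c_H}(t)\,dt\Big\}=0 .$$
   Context: Coercive: $H(s,p)\to+\infty$ as $|p|\to\infty$ uniformly in $s$; quasiconvex: convex sublevel sets in $p$. The minimum defining $c_H$ exists and $c_H\ge a_H$. *)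

theory Defs
  imports "HOL-Analysis.Analysis"
begin

definition coercive_H :: "(real \<Rightarrow> real \<Rightarrow> real) \<Rightarrow> bool" where
  "coercive_H H \<longleftrightarrow> (\<forall>M. \<exists>R. \<forall>s\<in>{0..1}. \<forall>p. \<bar>p\<bar> > R \<longrightarrow> H s p > M)"

definition quasiconvex_H :: "(real \<Rightarrow> real \<Rightarrow> real) \<Rightarrow> bool" where
  "quasiconvex_H H \<longleftrightarrow> (\<forall>s\<in>{0..1}. \<forall>b. convex {p. H s p \<le> b})"

definition visc_subsol :: "(real \<Rightarrow> real \<Rightarrow> real) \<Rightarrow> real \<Rightarrow> (real \<Rightarrow> real) \<Rightarrow> bool" where
  "visc_subsol H a u \<longleftrightarrow> continuous_on {0<..<1} u \<and>
     (\<forall>x0\<in>{0<..<1}. \<forall>\<phi> \<phi>'.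
        (\<forall>x\<in>{0<..<1}. (\<phi> has_real_derivative \<phi>' x) (at x)) \<and> continuous_on {0<..<1} \<phi>' \<and>
        (\<exists>e>0. \<forall>x\<in>{0<..<1}. \<bar>x - x0\<bar> < e \<longrightarrow> u x - \<phi> x \<le> u x0 - \<phi> x0)
        \<longrightarrow> H x0 (\<phi>' x0) \<le> a)"

definition periodic_subsol :: "(real \<Rightarrow> real \<Rightarrow> real) \<Rightarrow> real \<Rightarrow> (real \<Rightarrow> real) \<Rightarrow> bool" where
  "periodic_subsol H a u \<longleftrightarrow> continuous_on {0..1} u \<and> u 0 = u 1 \<and> visc_subsol H a u"

definition minH :: "(real \<Rightarrow> real \<Rightarrow> real) \<Rightarrow> real \<Rightarrow> real" where
  "minH H s = Inf (range (H s))"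

definition a_H :: "(real \<Rightarrow> real \<Rightarrow> real) \<Rightarrow> real" where
  "a_H H = Sup (minH H ` {0..1})"

text \<open>c_H = min of those a admitting a periodic subsolution (the minimum exists).\<close>
definition c_H :: "(real \<Rightarrow> real \<Rightarrow> real) \<Rightarrow> real" where
  "c_H H = Inf {a. \<exists>u. periodic_subsol H a u}"

definition sigma_plus :: "(real \<Rightarrow> real \<Rightarrow> real) \<Rightarrow> real \<Rightarrow> real \<Rightarrow> real" where
  "sigma_plus H a s = Sup {p. H s p = a}"

definition sigma_minus :: "(real \<Rightarrow> real \<Rightarrow> real) \<Rightarrow> real \<Rightarrow> real \<Rightarrow> real" where
  "sigma_minus H a s = Inf {p. H s p = a}"

end

theory Submission
  imports Defs
begin

lemma Hcont_p:
  fixes H :: "real \<Rightarrow> real \<Rightarrow> real"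
  assumes cont: "continuous_on ({0..1} \<times> UNIV) (\<lambda>(s, p). H s p)" and s: "s \<in> {0..1}"
  shows "continuous_on UNIV (H s)"
proof -
  have "continuous_on UNIV ((\<lambda>(s, p). H s p) \<circ> (\<lambda>p. (s, p)))"
    by (rule continuous_on_compose) (auto intro!: continuous_intros continuous_on_subset[OF cont] simp: s[simplified])
  then show ?thesis by (simp add: o_def)
qed

lemma Hcont_s:
  fixes H :: "real \<Rightarrow> real \<Rightarrow> real"
  assumes cont: "continuous_on ({0..1} \<times> UNIV) (\<lambda>(s, p). H s p)"
  shows "continuous_on {0..1} (\<lambda>s. H s p)"
proof -
  have "continuous_on {0..1} ((\<lambda>(s, p). H s p) \<circ> (\<lambda>s. (s, p)))"
    by (rule continuous_on_compose) (auto intro!: continuous_intros continuous_on_subset[OF cont])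
  then show ?thesis by (simp add: o_def)
qed

lemma Hcont_comp:
  fixes H :: "real \<Rightarrow> real \<Rightarrow> real" and f :: "real \<Rightarrow> real"
  assumes cont: "continuous_on ({0..1} \<times> UNIV) (\<lambda>(s, p). H s p)"
    and f: "continuous_on {0..1} f"
  shows "continuous_on {0..1} (\<lambda>s. H s (f s))"
proof -
  have "continuous_on {0..1} ((\<lambda>(s, p). H s p) \<circ> (\<lambda>s. (s, f s)))"
    by (rule continuous_on_compose) (auto intro!: continuous_intros continuous_on_subset[OF cont] f)
  then show ?thesis by (simp add: o_def)
qed

lemma FTC01:
  fixes f :: "real \<Rightarrow> real"
  assumes f: "continuous_on {0..1} f" and x: "x \<in> {0<..<1::real}"
  shows "((\<lambda>x. integral {0..x} f) has_real_derivative f x) (at x)"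
proof -
  have "((\<lambda>u. integral {0..u} f) has_vector_derivative f x) (at x within {0..1})"
    using integral_has_vector_derivative[OF f] x by auto
  then have "((\<lambda>u. integral {0..u} f) has_vector_derivative f x) (at x)"
    using x by (subst (asm) at_within_interior) auto
  then show ?thesis by (simp add: has_real_derivative_iff_has_vector_derivative)
qed

lemma UA:
  fixes H :: "real \<Rightarrow> real \<Rightarrow> real"
  assumes cont: "continuous_on ({0..1} \<times> UNIV) (\<lambda>(s, p). H s p)" and s: "s \<in> {0..1}"
    and ab: "\<alpha> \<le> \<beta>" and gt: "\<forall>p\<in>{\<alpha>..\<beta>}. H s p > c"
  shows "\<exists>d>0. \<forall>s'\<in>{0..1}. \<bar>s' - s\<bar> < d \<longrightarrow> (\<forall>p\<in>{\<alpha>..\<beta>}. H s' p > c)"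
proof -
  have "continuous_on {\<alpha>..\<beta>} (H s)" using Hcont_p[OF cont s] continuous_on_subset by blast
  then obtain p0 where p0: "p0 \<in> {\<alpha>..\<beta>}" "\<forall>p\<in>{\<alpha>..\<beta>}. H s p0 \<le> H s p"
    using continuous_attains_inf[of "{\<alpha>..\<beta>}" "H s"] ab by auto
  define \<eta> where "\<eta> = H s p0 - c"
  have eta: "\<eta> > 0" using gt p0 by (auto simp: \<eta>_def)
  have "uniformly_continuous_on ({0..1} \<times> {\<alpha>..\<beta>}) (\<lambda>(s, p). H s p)"
    by (rule compact_uniformly_continuous) (auto intro: continuous_on_subset[OF cont] compact_Times)
  then obtain d where d: "d > 0" and dd: "\<forall>x\<in>{0..1} \<times> {\<alpha>..\<beta>}. \<forall>x'\<in>{0..1} \<times> {\<alpha>..\<beta>}.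
      dist x' x < d \<longrightarrow> dist ((\<lambda>(s, p). H s p) x') ((\<lambda>(s, p). H s p) x) < \<eta>"
    unfolding uniformly_continuous_on_def using eta by metis
  show ?thesis
  proof (intro exI[of _ d] conjI ballI impI d)
    fix s' p assume s': "s' \<in> {0..1}" "\<bar>s' - s\<bar> < d" and p: "p \<in> {\<alpha>..\<beta>}"
    have "dist (s', p) (s, p) < d" using s' by (simp add: dist_Pair_Pair dist_real_def)
    then have "dist (H s' p) (H s p) < \<eta>" using dd s s' p by fastforce
    moreover have "H s p0 \<le> H s p" using p0 p by auto
    ultimately show "H s' p > c" by (auto simp: \<eta>_def dist_real_def)
  qed
qed

lemma Lplus:
  fixes H :: "real \<Rightarrow> real \<Rightarrow> real" and u \<psi> \<psi>' :: "real \<Rightarrow> real"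
  assumes uc: "continuous_on {0..1} u" and vs: "visc_subsol H a u"
    and psic: "continuous_on {0..1} \<psi>"
    and psid: "\<forall>x\<in>{0<..<1}. (\<psi> has_real_derivative \<psi>' x) (at x)"
    and psic': "continuous_on {0<..<1} \<psi>'"
    and hyp: "\<forall>r\<in>{0<..<1}. \<forall>q. q \<ge> \<psi>' r \<longrightarrow> a < H r q"
  shows "u 1 - \<psi> 1 \<le> u 0 - \<psi> 0"
proof (rule ccontr)
  define w where "w x = u x - \<psi> x" for x
  assume "\<not> ?thesis"
  then have w10: "w 1 > w 0" by (simp add: w_def)
  have wc: "continuous_on {0..1} w" unfolding w_def by (intro continuous_intros uc psic)
  obtain d where d: "d > 0" and dd: "\<forall>x'\<in>{0..1}. dist x' 1 < d \<longrightarrow> dist (w x') (w 1) < w 1 - w 0"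
    using wc w10 unfolding continuous_on_iff by (metis atLeastAtMost_iff order_refl zero_le_one diff_gt_0_iff_gt)
  define r1 where "r1 = max (1/2) (1 - d/2)"
  have r1: "0 < r1" "r1 < 1" using d by (auto simp: r1_def)
  have "dist r1 1 < d" using d by (auto simp: r1_def dist_real_def)
  then have "dist (w r1) (w 1) < w 1 - w 0" using dd r1 by auto
  then have wr1: "w r1 > w 0" by (auto simp: dist_real_def)
  define \<delta> where "\<delta> = w r1 - w 0"
  define D where "D = w 1 - w r1"
  define K where "K = (2*\<bar>D\<bar>+2)/(\<delta>*(1-r1))"
  define g where "g x = \<delta>/2 * exp (K*(x - r1))" for x
  have dpos: "\<delta> > 0" using wr1 by (simp add: \<delta>_def)
  have Kpos: "K > 0" using dpos r1 by (auto simp: K_def intro!: divide_pos_pos)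
  have KK: "K*(1-r1) = (2*\<bar>D\<bar>+2)/\<delta>" using r1 dpos by (simp add: K_def)
  have g0: "g 0 > 0" using dpos by (simp add: g_def)
  have gr1: "g r1 = \<delta>/2" by (simp add: g_def)
  have "g 1 \<ge> \<delta>/2 * (1 + K*(1-r1))" unfolding g_def using dpos exp_ge_add_one_self[of "K*(1-r1)"]
    by (intro mult_left_mono) (auto simp: algebra_simps)
  also have "\<delta>/2 * (1 + K*(1-r1)) = \<delta>/2 + (\<bar>D\<bar>+1)" using dpos by (simp add: KK field_simps)
  finally have g1: "g 1 \<ge> \<delta>/2 + (\<bar>D\<bar>+1)" .
  have "continuous_on {0..1} (\<lambda>x. w x - g x)" unfolding g_def by (intro continuous_intros wc)
  then obtain x0 where x0: "x0 \<in> {0..1}" and mx: "\<forall>x\<in>{0..1}. w x - g x \<le> w x0 - g x0"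
    using continuous_attains_sup[of "{0..1}" "\<lambda>x. w x - g x"] by auto
  have "w r1 - g r1 \<le> w x0 - g x0" using mx r1 by auto
  moreover have "w 0 - g 0 < w r1 - g r1" using g0 gr1 dpos by (simp add: \<delta>_def)
  moreover have "w 1 - g 1 < w r1 - g r1" using g1 gr1 unfolding D_def by (smt (verit) abs_ge_self)
  ultimately have "x0 \<noteq> 0" "x0 \<noteq> 1" by auto
  with x0 have x0i: "x0 \<in> {0<..<1}" by auto
  define \<phi> where "\<phi> x = \<psi> x + g x" for x
  define \<phi>' where "\<phi>' x = \<psi>' x + \<delta>/2 * (K * exp (K*(x - r1)))" for x
  have "(\<forall>x\<in>{0<..<1}. (\<phi> has_real_derivative \<phi>' x) (at x)) \<and> continuous_on {0<..<1} \<phi>' \<and>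
        (\<exists>e>0. \<forall>x\<in>{0<..<1}. \<bar>x - x0\<bar> < e \<longrightarrow> u x - \<phi> x \<le> u x0 - \<phi> x0)"
  proof (intro conjI ballI)
    fix x :: real assume x: "x \<in> {0<..<1}"
    show "(\<phi> has_real_derivative \<phi>' x) (at x)"
      unfolding \<phi>_def \<phi>'_def g_def using psid x
      by (auto intro!: derivative_eq_intros)
  next
    show "continuous_on {0<..<1} \<phi>'" unfolding \<phi>'_def by (intro continuous_intros psic')
  next
    show "\<exists>e>0. \<forall>x\<in>{0<..<1}. \<bar>x - x0\<bar> < e \<longrightarrow> u x - \<phi> x \<le> u x0 - \<phi> x0"
      using mx by (intro exI[of _ 1]) (auto simp: \<phi>_def w_def algebra_simps)
  qed
  then have "H x0 (\<phi>' x0) \<le> a" using vs x0i unfolding visc_subsol_def by blast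
  moreover have "\<phi>' x0 \<ge> \<psi>' x0" unfolding \<phi>'_def using dpos Kpos by auto
  ultimately show False using hyp x0i by fastforce
qed

lemma Lminus:
  fixes H :: "real \<Rightarrow> real \<Rightarrow> real" and u \<psi> \<psi>' :: "real \<Rightarrow> real"
  assumes uc: "continuous_on {0..1} u" and vs: "visc_subsol H a u"
    and psic: "continuous_on {0..1} \<psi>"
    and psid: "\<forall>x\<in>{0<..<1}. (\<psi> has_real_derivative \<psi>' x) (at x)"
    and psic': "continuous_on {0<..<1} \<psi>'"
    and hyp: "\<forall>r\<in>{0<..<1}. \<forall>q. q \<le> \<psi>' r \<longrightarrow> a < H r q"
  shows "u 1 - \<psi> 1 \<ge> u 0 - \<psi> 0"
proof (rule ccontr)
  define w where "w x = u x - \<psi> x" for x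
  assume "\<not> ?thesis"
  then have w10: "w 0 > w 1" by (simp add: w_def)
  have wc: "continuous_on {0..1} w" unfolding w_def by (intro continuous_intros uc psic)
  obtain d where d: "d > 0" and dd: "\<forall>x'\<in>{0..1}. dist x' 0 < d \<longrightarrow> dist (w x') (w 0) < w 0 - w 1"
    using wc w10 unfolding continuous_on_iff by (metis atLeastAtMost_iff order_refl zero_le_one diff_gt_0_iff_gt)
  define r1 where "r1 = min (1/2) (d/2)"
  have r1: "0 < r1" "r1 < 1" using d by (auto simp: r1_def)
  have "dist r1 0 < d" using d by (auto simp: r1_def dist_real_def)
  then have "dist (w r1) (w 0) < w 0 - w 1" using dd r1 by auto
  then have wr1: "w r1 > w 1" by (auto simp: dist_real_def)
  define \<delta> where "\<delta> = w r1 - w 1"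
  define D where "D = w 0 - w r1"
  define K where "K = (2*\<bar>D\<bar>+2)/(\<delta>*r1)"
  define g where "g x = \<delta>/2 * exp (K*(r1 - x))" for x
  have dpos: "\<delta> > 0" using wr1 by (simp add: \<delta>_def)
  have Kpos: "K > 0" using dpos r1 by (auto simp: K_def intro!: divide_pos_pos)
  have KK: "K*r1 = (2*\<bar>D\<bar>+2)/\<delta>" using r1 dpos by (simp add: K_def)
  have g0: "g 1 > 0" using dpos by (simp add: g_def)
  have gr1: "g r1 = \<delta>/2" by (simp add: g_def)
  have "g 0 \<ge> \<delta>/2 * (1 + K*r1)" unfolding g_def using dpos exp_ge_add_one_self[of "K*r1"]
    by (intro mult_left_mono) (auto simp: algebra_simps)
  also have "\<delta>/2 * (1 + K*r1) = \<delta>/2 + (\<bar>D\<bar>+1)" using dpos by (simp add: KK field_simps)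
  finally have g1: "g 0 \<ge> \<delta>/2 + (\<bar>D\<bar>+1)" .
  have "continuous_on {0..1} (\<lambda>x. w x - g x)" unfolding g_def by (intro continuous_intros wc)
  then obtain x0 where x0: "x0 \<in> {0..1}" and mx: "\<forall>x\<in>{0..1}. w x - g x \<le> w x0 - g x0"
    using continuous_attains_sup[of "{0..1}" "\<lambda>x. w x - g x"] by auto
  have "w r1 - g r1 \<le> w x0 - g x0" using mx r1 by auto
  moreover have "w 1 - g 1 < w r1 - g r1" using g0 gr1 dpos by (simp add: \<delta>_def)
  moreover have "w 0 - g 0 < w r1 - g r1" using g1 gr1 unfolding D_def by (smt (verit) abs_ge_self)
  ultimately have "x0 \<noteq> 0" "x0 \<noteq> 1" by auto
  with x0 have x0i: "x0 \<in> {0<..<1}" by auto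
  define \<phi> where "\<phi> x = \<psi> x + g x" for x
  define \<phi>' where "\<phi>' x = \<psi>' x - \<delta>/2 * (K * exp (K*(r1 - x)))" for x
  have "(\<forall>x\<in>{0<..<1}. (\<phi> has_real_derivative \<phi>' x) (at x)) \<and> continuous_on {0<..<1} \<phi>' \<and>
        (\<exists>e>0. \<forall>x\<in>{0<..<1}. \<bar>x - x0\<bar> < e \<longrightarrow> u x - \<phi> x \<le> u x0 - \<phi> x0)"
  proof (intro conjI ballI)
    fix x :: real assume x: "x \<in> {0<..<1}"
    show "(\<phi> has_real_derivative \<phi>' x) (at x)"
      unfolding \<phi>_def \<phi>'_def g_def using psid x
      by (auto intro!: derivative_eq_intros)
  next
    show "continuous_on {0<..<1} \<phi>'" unfolding \<phi>'_def by (intro continuous_intros psic')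
  next
    show "\<exists>e>0. \<forall>x\<in>{0<..<1}. \<bar>x - x0\<bar> < e \<longrightarrow> u x - \<phi> x \<le> u x0 - \<phi> x0"
      using mx by (intro exI[of _ 1]) (auto simp: \<phi>_def w_def algebra_simps)
  qed
  then have "H x0 (\<phi>' x0) \<le> a" using vs x0i unfolding visc_subsol_def by blast
  moreover have "\<phi>' x0 \<le> \<psi>' x0" unfolding \<phi>'_def using dpos Kpos by auto
  ultimately show False using hyp x0i by fastforce
qed

lemma Cons_sub:
  fixes H :: "real \<Rightarrow> real \<Rightarrow> real" and f :: "real \<Rightarrow> real"
  assumes f: "continuous_on {0..1} f" and i0: "integral {0..1} f = 0"
    and le: "\<forall>s\<in>{0<..<1}. H s (f s) \<le> a"
  shows "periodic_subsol H a (\<lambda>x. integral {0..x} f)"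
proof -
  define u where "u x = integral {0..x} f" for x
  have uc: "continuous_on {0..1} u" unfolding u_def
    by (rule indefinite_integral_continuous_1) (rule integrable_continuous_interval[OF f])
  have ud: "\<forall>x\<in>{0<..<1}. (u has_real_derivative f x) (at x)" unfolding u_def using FTC01[OF f] by auto
  have "visc_subsol H a u" unfolding visc_subsol_def
  proof (intro conjI ballI allI impI)
    show "continuous_on {0<..<1} u" using uc by (rule continuous_on_subset) auto
  next
    fix x0 \<phi> \<phi>' assume x0: "x0 \<in> {0<..<1}" and
      A: "(\<forall>x\<in>{0<..<1}. (\<phi> has_real_derivative \<phi>' x) (at x)) \<and> continuous_on {0<..<1} \<phi>' \<and>
        (\<exists>e>0. \<forall>x\<in>{0<..<1}. \<bar>x - x0\<bar> < e \<longrightarrow> u x - \<phi> x \<le> u x0 - \<phi> x0)"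
    then obtain e where e: "e > 0" and ee: "\<forall>x\<in>{0<..<1}. \<bar>x - x0\<bar> < e \<longrightarrow> u x - \<phi> x \<le> u x0 - \<phi> x0"
      by blast
    have der: "((\<lambda>x. u x - \<phi> x) has_real_derivative (f x0 - \<phi>' x0)) (at x0)"
      using A ud x0 by (auto intro!: derivative_eq_intros)
    define d where "d = min e (min x0 (1 - x0))"
    have dpos: "d > 0" using e x0 by (auto simp: d_def)
    have "\<forall>y. \<bar>x0 - y\<bar> < d \<longrightarrow> u y - \<phi> y \<le> u x0 - \<phi> x0"
    proof (intro allI impI)
      fix y assume "\<bar>x0 - y\<bar> < d"
      then have "y \<in> {0<..<1}" "\<bar>y - x0\<bar> < e" by (auto simp: d_def abs_if split: if_splits)
      then show "u y - \<phi> y \<le> u x0 - \<phi> x0" using ee by blast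
    qed
    then have "f x0 - \<phi>' x0 = 0" using DERIV_local_max[OF der dpos] by blast
    then show "H x0 (\<phi>' x0) \<le> a" using le x0 by (metis eq_iff_diff_eq_0)
  qed
  moreover have "u 0 = u 1" using i0 by (simp add: u_def)
  ultimately show ?thesis using uc unfolding periodic_subsol_def u_def by auto
qed

lemma level_sp:
  fixes H :: "real \<Rightarrow> real \<Rightarrow> real"
  assumes cont: "continuous_on ({0..1} \<times> UNIV) (\<lambda>(s, p). H s p)"
    and coer: "coercive_H H"
    and qconv: "quasiconvex_H H"
    and int_cond: "\<forall>s\<in>{0..1}. \<forall>b. interior {p. H s p \<le> b} = {p. H s p < b}"
    and ne: "\<forall>s\<in>{0..1}. \<exists>p. H s p \<le> c"
  shows "\<forall>s\<in>{0..1}. H s (sigma_plus H c s) \<le> c \<and> (\<forall>p. p > sigma_plus H c s \<longrightarrow> H s p > c)"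
    and "continuous_on {0..1} (sigma_plus H c)"
proof -
  obtain R where R: "\<forall>s\<in>{0..1}. \<forall>p. \<bar>p\<bar> > R \<longrightarrow> H s p > c"
    using coer unfolding coercive_H_def by blast
  define Q where "Q s = {p. H s p \<le> c}" for s
  define hi where "hi s = Sup (Q s)" for s
  define lo where "lo s = Inf (Q s)" for s
  have Qb: "Q s \<subseteq> {-R..R}" if s: "s \<in> {0..1}" for s
  proof
    fix p assume "p \<in> Q s"
    then have "H s p \<le> c" by (simp add: Q_def)
    then have "\<not> \<bar>p\<bar> > R" using R s by (meson not_less)
    then show "p \<in> {-R..R}" by auto
  qed
  have Qne: "Q s \<noteq> {}" if s: "s \<in> {0..1}" for s using ne s by (auto simp: Q_def)
  have Qc: "closed (Q s)" if s: "s \<in> {0..1}" for s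
    unfolding Q_def by (rule closed_Collect_le) (auto intro: Hcont_p[OF cont s])
  have bda: "bdd_above (Q s)" and bdb: "bdd_below (Q s)" if s: "s \<in> {0..1}" for s
    using Qb[OF s] by (auto intro: bdd_above_mono bdd_below_mono)
  have hiQ: "hi s \<in> Q s" and loQ: "lo s \<in> Q s" if s: "s \<in> {0..1}" for s
    using closed_contains_Sup[OF Qne[OF s] bda[OF s] Qc[OF s]]
      closed_contains_Inf[OF Qne[OF s] bdb[OF s] Qc[OF s]] by (auto simp: hi_def lo_def)
  have Qle: "p \<in> Q s \<Longrightarrow> lo s \<le> p \<and> p \<le> hi s" if s: "s \<in> {0..1}" for s p
    using bda[OF s] bdb[OF s] by (auto simp: hi_def lo_def intro: cSup_upper cInf_lower)
  have Qeq: "Q s = {lo s..hi s}" if s: "s \<in> {0..1}" for s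
  proof
    show "Q s \<subseteq> {lo s..hi s}"
    proof
      fix x assume "x \<in> Q s"
      then show "x \<in> {lo s..hi s}" using Qle[OF s, of x] by simp
    qed
  next
    have "convex {p. H s p \<le> c}" using qconv s unfolding quasiconvex_H_def by blast
    then have "is_interval (Q s)" unfolding Q_def by (simp add: is_interval_convex_1)
    then have iv: "\<forall>a\<in>Q s. \<forall>b\<in>Q s. \<forall>x. a \<le> x \<and> x \<le> b \<longrightarrow> x \<in> Q s" unfolding is_interval_1 .
    show "{lo s..hi s} \<subseteq> Q s"
    proof
      fix x assume "x \<in> {lo s..hi s}"
      then have "lo s \<le> x" "x \<le> hi s" by auto
      then show "x \<in> Q s" using iv loQ[OF s] hiQ[OF s] by blast
    qed
  qed
  have hic: "H s (hi s) = c" if s: "s \<in> {0..1}" for s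
  proof (rule ccontr)
    assume nc: "H s (hi s) \<noteq> c"
    then have lt: "H s (hi s) < c" using hiQ[OF s] by (auto simp: Q_def)
    have cc: "\<forall>x. \<forall>e>0. \<exists>d>0. \<forall>x'. dist x' x < d \<longrightarrow> dist (H s x') (H s x) < e"
      using Hcont_p[OF cont s] unfolding continuous_on_iff by blast
    obtain d where d: "d > 0" and dd: "\<forall>x'. dist x' (hi s) < d \<longrightarrow> dist (H s x') (H s (hi s)) < c - H s (hi s)"
      using spec[OF spec[OF cc, of "hi s"], of "c - H s (hi s)"] lt by auto
    have "dist (hi s + d/2) (hi s) < d" using d by (simp add: dist_real_def)
    then have "dist (H s (hi s + d/2)) (H s (hi s)) < c - H s (hi s)" using dd by blast
    then have "H s (hi s + d/2) < c" by (auto simp: dist_real_def)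
    then have "hi s + d/2 \<in> Q s" by (simp add: Q_def)
    then have "hi s + d/2 \<le> hi s" using Qle[OF s] by blast
    then show False using d by simp
  qed
  have sp: "sigma_plus H c s = hi s" if s: "s \<in> {0..1}" for s
    unfolding sigma_plus_def
  proof (rule cSup_eq_maximum)
    show "hi s \<in> {p. H s p = c}" using hic[OF s] by simp
    show "x \<le> hi s" if "x \<in> {p. H s p = c}" for x using that Qle[OF s] by (auto simp: Q_def)
  qed
  show "\<forall>s\<in>{0..1}. H s (sigma_plus H c s) \<le> c \<and> (\<forall>p. p > sigma_plus H c s \<longrightarrow> H s p > c)"
  proof (intro ballI conjI allI impI)
    fix s :: real assume s: "s \<in> {0..1}"
    show "H s (sigma_plus H c s) \<le> c" using hic[OF s] sp[OF s] by simp
    fix p assume "p > sigma_plus H c s"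
    then show "H s p > c" using Qle[OF s, of p] sp[OF s] by (force simp: Q_def)
  qed
  have hicont: "continuous_on {0..1} hi" unfolding continuous_on_iff
  proof (intro ballI allI impI)
    fix s e :: real assume s: "s \<in> {0..1}" and e: "e > 0"
    have hiR: "-R \<le> hi s' \<and> hi s' \<le> R" if "s' \<in> {0..1}" for s' using Qb[OF that] hiQ[OF that] by auto
    obtain d1 where d1: "d1 > 0" and dd1: "\<forall>s'\<in>{0..1}. \<bar>s' - s\<bar> < d1 \<longrightarrow> hi s' < hi s + e"
    proof (cases "hi s + e \<le> R")
      case True
      have "\<forall>p\<in>{hi s + e..R}. H s p > c"
      proof
        fix p assume p: "p \<in> {hi s + e..R}"
        then have "p \<notin> Q s" using Qle[OF s, of p] e by auto
        then show "H s p > c" by (auto simp: Q_def)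
      qed
      from UA[OF cont s True this] obtain d where d: "d > 0"
        and dd: "\<forall>s'\<in>{0..1}. \<bar>s' - s\<bar> < d \<longrightarrow> (\<forall>p\<in>{hi s + e..R}. c < H s' p)" by blast
      show ?thesis
      proof (rule that[OF d], intro ballI impI)
        fix s' assume s': "s' \<in> {0..1}" "\<bar>s' - s\<bar> < d"
        show "hi s' < hi s + e"
        proof (rule ccontr)
          assume "\<not> hi s' < hi s + e"
          then have "hi s' \<in> {hi s + e..R}" using hiR[OF s'(1)] by auto
          then have "H s' (hi s') > c" using dd s' by blast
          then show False using hiQ[OF s'(1)] by (auto simp: Q_def)
        qed
      qed
    next
      case False
      show ?thesis
      proof (rule that[of 1])
        show "\<forall>s'\<in>{0..1}. \<bar>s' - s\<bar> < 1 \<longrightarrow> hi s' < hi s + e" using False hiR by fastforce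
      qed simp
    qed
    obtain d2 where d2: "d2 > 0" and dd2: "\<forall>s'\<in>{0..1}. \<bar>s' - s\<bar> < d2 \<longrightarrow> hi s' > hi s - e"
    proof (cases "lo s < hi s")
      case True
      define p where "p = max (hi s - e/2) ((lo s + hi s)/2)"
      have "p \<in> {lo s<..<hi s}" using True e unfolding p_def by (auto simp: max_def)
      also have "{lo s<..<hi s} = interior (Q s)" using Qeq[OF s] by simp
      also have "\<dots> = {p. H s p < c}" using int_cond s by (simp add: Q_def)
      finally have Hp: "H s p < c" by simp
      have cc: "\<forall>x\<in>{0..1}. \<forall>e>0. \<exists>d>0. \<forall>x'\<in>{0..1}. dist x' x < d \<longrightarrow> dist (H x' p) (H x p) < e"
        using Hcont_s[OF cont, of p] unfolding continuous_on_iff by blast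
      obtain d where d: "d > 0" and dd: "\<forall>s'\<in>{0..1}. dist s' s < d \<longrightarrow> dist (H s' p) (H s p) < c - H s p"
        using spec[OF bspec[OF cc s], of "c - H s p"] Hp by auto
      show ?thesis
      proof (rule that[OF d], intro ballI impI)
        fix s' assume s': "s' \<in> {0..1}" "\<bar>s' - s\<bar> < d"
        then have "H s' p < c" using dd by (auto simp: dist_real_def)
        then have "p \<le> hi s'" using Qle[OF s'(1), of p] by (auto simp: Q_def)
        then show "hi s' > hi s - e" using e by (auto simp: p_def)
      qed
    next
      case False
      then have lohi: "lo s = hi s" using Qle[OF s hiQ[OF s]] by linarith
      show ?thesis
      proof (cases "-R \<le> hi s - e")
        case True
        have "\<forall>p\<in>{-R..hi s - e}. H s p > c"
        proof
          fix p assume p: "p \<in> {-R..hi s - e}"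
          then have "p \<notin> Q s" using Qle[OF s, of p] e lohi by auto
          then show "H s p > c" by (auto simp: Q_def)
        qed
        from UA[OF cont s True this] obtain d where d: "d > 0"
          and dd: "\<forall>s'\<in>{0..1}. \<bar>s' - s\<bar> < d \<longrightarrow> (\<forall>p\<in>{-R..hi s - e}. c < H s' p)" by blast
        show ?thesis
        proof (rule that[OF d], intro ballI impI)
          fix s' assume s': "s' \<in> {0..1}" "\<bar>s' - s\<bar> < d"
          show "hi s' > hi s - e"
          proof (rule ccontr)
            assume "\<not> hi s' > hi s - e"
            then have "hi s' \<in> {-R..hi s - e}" using hiR[OF s'(1)] by auto
            then have "H s' (hi s') > c" using dd s' by blast
            then show False using hiQ[OF s'(1)] by (auto simp: Q_def)
          qed
        qed
      next
        case False
        show ?thesis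
        proof (rule that[of 1])
          show "\<forall>s'\<in>{0..1}. \<bar>s' - s\<bar> < 1 \<longrightarrow> hi s' > hi s - e" using False hiR by fastforce
        qed simp
      qed
    qed
    show "\<exists>d>0. \<forall>s'\<in>{0..1}. dist s' s < d \<longrightarrow> dist (hi s') (hi s) < e"
    proof (intro exI[of _ "min d1 d2"] conjI ballI impI)
      show "min d1 d2 > 0" using d1 d2 by simp
      fix s' assume s': "s' \<in> {0..1}" "dist s' s < min d1 d2"
      then have "hi s' < hi s + e" "hi s' > hi s - e" using dd1 dd2 by (auto simp: dist_real_def)
      then show "dist (hi s') (hi s) < e" by (auto simp: dist_real_def abs_less_iff)
    qed
  qed
  show "continuous_on {0..1} (sigma_plus H c)"
    using hicont by (rule continuous_on_eq) (simp add: sp)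
qed

lemma neg_img: "uminus ` A = {x::real. -x \<in> A}"
proof safe
  fix x assume "- x \<in> A" then show "x \<in> uminus ` A" by (rule rev_image_eqI) simp
qed auto

lemma level_sm:
  fixes H :: "real \<Rightarrow> real \<Rightarrow> real"
  assumes cont: "continuous_on ({0..1} \<times> UNIV) (\<lambda>(s, p). H s p)"
    and coer: "coercive_H H"
    and qconv: "quasiconvex_H H"
    and int_cond: "\<forall>s\<in>{0..1}. \<forall>b. interior {p. H s p \<le> b} = {p. H s p < b}"
    and ne: "\<forall>s\<in>{0..1}. \<exists>p. H s p \<le> c"
  shows "\<forall>s\<in>{0..1}. H s (sigma_minus H c s) \<le> c \<and> (\<forall>p. p < sigma_minus H c s \<longrightarrow> H s p > c)"
    and "continuous_on {0..1} (sigma_minus H c)"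
proof -
  define H' where "H' s p = H s (-p)" for s p
  have cont': "continuous_on ({0..1} \<times> UNIV) (\<lambda>(s, p). H' s p)"
  proof -
    have "continuous_on ({0..1} \<times> UNIV) (\<lambda>x. (\<lambda>(s, p). H s p) (fst x, - snd x))"
      by (rule continuous_on_compose2[OF cont]) (auto intro!: continuous_intros)
    then show ?thesis by (simp add: H'_def case_prod_beta)
  qed
  have coer': "coercive_H H'" using coer unfolding coercive_H_def H'_def
    by (metis abs_minus_cancel)
  have setneg: "{p. H' s p \<le> b} = uminus ` {p. H s p \<le> b}" for s b
    by (simp add: neg_img H'_def)
  have setneg2: "{p. H' s p < b} = uminus ` {p. H s p < b}" for s b
    by (simp add: neg_img H'_def)
  have qconv': "quasiconvex_H H'" using qconv unfolding quasiconvex_H_def setneg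
    by (simp add: convex_negations)
  have int': "\<forall>s\<in>{0..1}. \<forall>b. interior {p. H' s p \<le> b} = {p. H' s p < b}"
    using int_cond unfolding setneg setneg2 by (simp add: interior_negations)
  have ne': "\<forall>s\<in>{0..1}. \<exists>p. H' s p \<le> c" using ne unfolding H'_def by (metis minus_minus)
  have sm: "sigma_minus H c s = - sigma_plus H' c s" for s
  proof -
    have "uminus ` {p. H s p = c} = {p. H' s p = c}" by (simp add: neg_img H'_def)
    then show ?thesis unfolding sigma_minus_def sigma_plus_def Inf_real_def by simp
  qed
  note L = level_sp[OF cont' coer' qconv' int' ne']
  show "\<forall>s\<in>{0..1}. H s (sigma_minus H c s) \<le> c \<and> (\<forall>p. p < sigma_minus H c s \<longrightarrow> H s p > c)"
  proof (intro ballI conjI allI impI)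
    fix s :: real assume s: "s \<in> {0..1}"
    have "H' s (sigma_plus H' c s) \<le> c" using L(1) s by blast
    then show "H s (sigma_minus H c s) \<le> c" by (simp add: sm H'_def)
    fix p assume "p < sigma_minus H c s"
    then have "-p > sigma_plus H' c s" by (simp add: sm)
    then have "H' s (-p) > c" using L(1) s by blast
    then show "H s p > c" by (simp add: H'_def)
  qed
  show "continuous_on {0..1} (sigma_minus H c)"
    unfolding sm by (intro continuous_intros L(2))
qed

theorem proposition5p7:
  fixes H :: "real \<Rightarrow> real \<Rightarrow> real"
  assumes cont: "continuous_on ({0..1} \<times> UNIV) (\<lambda>(s, p). H s p)"
    and coer: "coercive_H H"
    and qconv: "quasiconvex_H H"
    and int_cond: "\<forall>s\<in>{0..1}. \<forall>b. interior {p. H s p \<le> b} = {p. H s p < b}"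
    and alt: "c_H H > a_H H \<or> (\<exists>k. \<forall>s\<in>{0..1}. minH H s = k)"
  shows "min (- integral {0..1} (sigma_minus H (c_H H))) (integral {0..1} (sigma_plus H (c_H H))) = 0"
proof -
  define c where "c = c_H H"
  define A where "A = {a. \<exists>u. periodic_subsol H a u}"
  have cA: "c = Inf A" by (simp add: c_def A_def c_H_def)
  obtain R0 where R0: "\<forall>s\<in>{0..1}. \<forall>p. \<bar>p\<bar> > R0 \<longrightarrow> H s p > 0"
    using coer unfolding coercive_H_def by blast
  define K0 where "K0 = {0..1::real} \<times> {-\<bar>R0\<bar>..\<bar>R0\<bar>}"
  have "continuous_on K0 (\<lambda>(s, p). H s p)" unfolding K0_def by (rule continuous_on_subset[OF cont]) auto
  moreover have "compact K0" "K0 \<noteq> {}" unfolding K0_def by (auto intro: compact_Times)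
  ultimately obtain x1 where x1: "x1 \<in> K0" and x1m: "\<forall>x\<in>K0. (\<lambda>(s, p). H s p) x1 \<le> (\<lambda>(s, p). H s p) x"
    using continuous_attains_inf[of K0 "\<lambda>(s, p). H s p"] by blast
  define m where "m = min 0 ((\<lambda>(s, p). H s p) x1)"
  have Hlow: "m \<le> H s p" if s: "s \<in> {0..1}" for s p
  proof (cases "\<bar>p\<bar> > R0")
    case True then show ?thesis using R0 s by (force simp: m_def)
  next
    case False
    then have "(s, p) \<in> K0" using s by (auto simp: K0_def)
    then show ?thesis using x1m by (force simp: m_def)
  qed
  have argmin: "\<exists>p. \<forall>q. H s p \<le> H s q" if s: "s \<in> {0..1}" for s
  proof -
    obtain R where R: "\<forall>s'\<in>{0..1}. \<forall>p. \<bar>p\<bar> > R \<longrightarrow> H s' p > H s 0"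
      using coer unfolding coercive_H_def by blast
    have "continuous_on {-\<bar>R\<bar>..\<bar>R\<bar>} (H s)" using Hcont_p[OF cont s] continuous_on_subset by blast
    then obtain p0 where p0: "p0 \<in> {-\<bar>R\<bar>..\<bar>R\<bar>}" "\<forall>q\<in>{-\<bar>R\<bar>..\<bar>R\<bar>}. H s p0 \<le> H s q"
      using continuous_attains_inf[of "{-\<bar>R\<bar>..\<bar>R\<bar>}" "H s"] by auto
    have h0: "H s p0 \<le> H s 0" using p0 by auto
    show ?thesis
    proof (intro exI allI)
      fix q show "H s p0 \<le> H s q"
      proof (cases "q \<in> {-\<bar>R\<bar>..\<bar>R\<bar>}")
        case True then show ?thesis using p0 by auto
      next
        case False then have "\<bar>q\<bar> > R" by auto
        then have "H s q > H s 0" using R s by blast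
        then show ?thesis using h0 by linarith
      qed
    qed
  qed
  have minH_eq: "\<exists>p. minH H s = H s p" if s: "s \<in> {0..1}" for s
  proof -
    obtain p where p: "\<forall>q. H s p \<le> H s q" using argmin[OF s] by blast
    have "Inf (range (H s)) = H s p" by (rule cInf_eq_minimum) (use p in auto)
    then show ?thesis unfolding minH_def by blast
  qed
  have minH_le: "minH H s \<le> H s q" if s: "s \<in> {0..1}" for s q
  proof -
    have "bdd_below (range (H s))" using Hlow[OF s] by (intro bdd_belowI[of _ m]) auto
    then show ?thesis unfolding minH_def by (intro cInf_lower) auto
  qed
  obtain s0 where s0: "s0 \<in> {0..1}" and s0m: "\<forall>s\<in>{0..1}. H s 0 \<le> H s0 0"
    using continuous_attains_sup[of "{0..1}" "\<lambda>s. H s 0"] Hcont_s[OF cont] by auto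
  have "periodic_subsol H (H s0 0) (\<lambda>x. integral {0..x} (\<lambda>_. 0::real))"
    by (rule Cons_sub) (use s0m in auto)
  then have "H s0 0 \<in> A" unfolding A_def by blast
  then have Ane: "A \<noteq> {}" by blast
  have noA: "\<exists>r\<in>{0<..<1}. \<exists>q. H r q \<le> a" if a: "a \<in> A" for a
  proof (rule ccontr)
    assume "\<not> ?thesis"
    then have hyp: "\<forall>r\<in>{0<..<1}. \<forall>q. q \<ge> -1 \<longrightarrow> a < H r q" by (auto simp: not_le)
    obtain u where u: "periodic_subsol H a u" using a unfolding A_def by blast
    have d1: "\<forall>x\<in>{0<..<1}. ((\<lambda>x::real. -x) has_real_derivative -1) (at x)"
      by (auto intro!: derivative_eq_intros)
    have c1: "continuous_on {0..1} (\<lambda>x::real. -x)" by (intro continuous_intros)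
    have c2: "continuous_on {0<..<1} (\<lambda>x::real. -1::real)" by (intro continuous_intros)
    have "u 1 - (- 1) \<le> u 0 - (- 0)"
      using Lplus[of u H a "\<lambda>x. -x" "\<lambda>_. -1", OF _ _ c1 d1 c2] u hyp
      by (auto simp: periodic_subsol_def)
    then show False using u by (simp add: periodic_subsol_def)
  qed
  have Abdd: "bdd_below A"
  proof (rule bdd_belowI)
    fix a assume "a \<in> A"
    then obtain r q where "r \<in> {0<..<1}" "H r q \<le> a" using noA by blast
    then show "m \<le> a" using Hlow[of r q] by auto
  qed
  have main: "(\<forall>s\<in>{0..1}. \<exists>p. H s p \<le> c) \<and> ((\<forall>s\<in>{0..1}. \<exists>p. H s p < c) \<or> (\<forall>s\<in>{0..1}. \<forall>p. c \<le> H s p))"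
  proof (cases "c > a_H H")
    case True
    have "bdd_above (minH H ` {0..1})"
    proof (rule bdd_aboveI[of _ "H s0 0"])
      fix x assume "x \<in> minH H ` {0..1}"
      then obtain s where s: "s \<in> {0..1}" "x = minH H s" by blast
      then show "x \<le> H s0 0" using minH_le[OF s(1), of 0] s0m by force
    qed
    then have "minH H s \<le> a_H H" if "s \<in> {0..1}" for s
      unfolding a_H_def using that by (auto intro: cSup_upper)
    then have "\<exists>p. H s p < c" if s01: "s \<in> {0..1}" for s
    proof -
      have le: "minH H s \<le> a_H H" using s01 \<open>\<And>s. s \<in> {0..1} \<Longrightarrow> minH H s \<le> a_H H\<close> by blast
      obtain p where "minH H s = H s p" using minH_eq[OF s01] by blast
      then show ?thesis using True le by (intro exI[of _ p]) linarith
    qed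
    then show ?thesis by (meson less_imp_le)
  next
    case False
    then obtain k where k: "\<forall>s\<in>{0..1}. minH H s = k" using alt c_def by auto
    have "minH H ` {0..1} = {k}" using k by force
    then have aH: "a_H H = k" by (simp add: a_H_def)
    have "k \<le> c" unfolding cA
    proof (rule cInf_greatest[OF Ane])
      fix a assume "a \<in> A"
      then obtain r q where "r \<in> {0<..<1}" "H r q \<le> a" using noA by blast
      then show "k \<le> a" using minH_le[of r q] k by auto
    qed
    then have ck: "c = k" using False aH by auto
    have "\<exists>p. H s p \<le> c" if "s \<in> {0..1}" for s using minH_eq[OF that] k that ck by force
    moreover have "\<forall>s\<in>{0..1}. \<forall>p. c \<le> H s p" using minH_le k ck by force
    ultimately show ?thesis by blast
  qed
  then have ne: "\<forall>s\<in>{0..1}. \<exists>p. H s p \<le> c" by blast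
  note SP = level_sp[OF cont coer qconv int_cond ne]
  note SM = level_sm[OF cont coer qconv int_cond ne]
  define sp where "sp = sigma_plus H c"
  define sm where "sm = sigma_minus H c"
  have spc: "continuous_on {0..1} sp" using SP(2) by (simp add: sp_def)
  have smc: "continuous_on {0..1} sm" using SM(2) by (simp add: sm_def)
  have Hsp: "H s (sp s) \<le> c" and sp_gt: "\<And>p. p > sp s \<Longrightarrow> H s p > c" if "s \<in> {0..1}" for s
    using SP(1) that by (auto simp: sp_def)
  have Hsm: "H s (sm s) \<le> c" and sm_lt: "\<And>p. p < sm s \<Longrightarrow> H s p > c" if "s \<in> {0..1}" for s
    using SM(1) that by (auto simp: sm_def)
  have cvx: "H s p \<le> b" if s: "s \<in> {0..1}" and "H s x \<le> b" "H s y \<le> b" "x \<le> p" "p \<le> y" for s p b x y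
  proof -
    have "convex {p. H s p \<le> b}" using qconv s unfolding quasiconvex_H_def by blast
    then have "is_interval {p. H s p \<le> b}" by (simp add: is_interval_convex_1)
    then have iv: "\<forall>a\<in>{p. H s p \<le> b}. \<forall>b'\<in>{p. H s p \<le> b}. \<forall>x. a \<le> x \<and> x \<le> b' \<longrightarrow> x \<in> {p. H s p \<le> b}"
      unfolding is_interval_1 .
    have "x \<in> {p. H s p \<le> b}" "y \<in> {p. H s p \<le> b}" using that by auto
    then have "p \<in> {p. H s p \<le> b}" using iv \<open>x \<le> p\<close> \<open>p \<le> y\<close> by blast
    then show ?thesis by simp
  qed
  have Qeq: "{p. H s p \<le> c} = {sm s..sp s}" if s: "s \<in> {0..1}" for s
  proof safe
    fix p assume "H s p \<le> c"
    then show "p \<in> {sm s..sp s}" using sp_gt[OF s, of p] sm_lt[OF s, of p] by (auto simp: not_less[symmetric])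
  next
    fix p assume "p \<in> {sm s..sp s}"
    then show "H s p \<le> c" using cvx[OF s Hsm[OF s] Hsp[OF s]] by auto
  qed
  have spi: "sp integrable_on {0..1}" using spc by (rule integrable_continuous_interval)
  have smi: "sm integrable_on {0..1}" using smc by (rule integrable_continuous_interval)
  have G2a: "integral {0..1} sp \<ge> 0"
  proof (rule ccontr)
    define I where "I = integral {0..1} sp"
    assume "\<not> integral {0..1} sp \<ge> 0"
    then have I: "I < 0" by (simp add: I_def)
    define \<epsilon> where "\<epsilon> = - I / 2"
    define f where "f x = sp x + \<epsilon>" for x
    have fc: "continuous_on {0..1} f" unfolding f_def by (intro continuous_intros spc)
    have gc: "continuous_on {0..1} (\<lambda>x. H x (f x))" by (rule Hcont_comp[OF cont fc])
    obtain x1 where x1: "x1 \<in> {0..1}" and x1m: "\<forall>x\<in>{0..1}. H x1 (f x1) \<le> H x (f x)"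
      using continuous_attains_inf[OF _ _ gc] by auto
    define a' where "a' = H x1 (f x1)"
    have "a' > c" unfolding a'_def using sp_gt[OF x1] I by (simp add: f_def \<epsilon>_def)
    then have "Inf A < a'" using cA by simp
    then obtain a where aA: "a \<in> A" and aa: "a < a'" using cInf_less_iff[OF Ane Abdd] by blast
    obtain u where u: "periodic_subsol H a u" using aA unfolding A_def by blast
    have hyp: "\<forall>r\<in>{0<..<1}. \<forall>q. q \<ge> f r \<longrightarrow> a < H r q"
    proof (intro ballI allI impI)
      fix r q assume r: "r \<in> {0<..<1}" and q: "q \<ge> f r"
      then have r01: "r \<in> {0..1}" by auto
      have ge: "H r q \<ge> H r (f r)"
      proof (rule ccontr)
        assume "\<not> ?thesis"
        then have lt: "H r q < H r (f r)" by simp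
        have "q > sp r" using q I by (simp add: f_def \<epsilon>_def)
        then have "H r q > c" using sp_gt[OF r01] by blast
        then have "H r (sp r) \<le> H r q" using Hsp[OF r01] by simp
        then have "H r (f r) \<le> H r q" using cvx[OF r01, where p="f r" and b="H r q" and x="sp r" and y=q] q I
          by (simp add: f_def \<epsilon>_def)
        then show False using lt by simp
      qed
      moreover have "H x1 (f x1) \<le> H r (f r)" using x1m r01 by blast
      ultimately show "a < H r q" using aa by (simp add: a'_def)
    qed
    define \<psi> where "\<psi> x = integral {0..x} f" for x
    have "u 1 - \<psi> 1 \<le> u 0 - \<psi> 0"
    proof (rule Lplus[of u H a \<psi> f])
      show "continuous_on {0..1} u" "visc_subsol H a u" using u by (auto simp: periodic_subsol_def)
      show "continuous_on {0..1} \<psi>" unfolding \<psi>_def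
        by (rule indefinite_integral_continuous_1) (rule integrable_continuous_interval[OF fc])
      show "\<forall>x\<in>{0<..<1}. (\<psi> has_real_derivative f x) (at x)" unfolding \<psi>_def using FTC01[OF fc] by blast
      show "continuous_on {0<..<1} f" using fc by (rule continuous_on_subset) auto
      show "\<forall>r\<in>{0<..<1}. \<forall>q. q \<ge> f r \<longrightarrow> a < H r q" by (rule hyp)
    qed
    then have "\<psi> 1 \<ge> 0" using u by (simp add: periodic_subsol_def \<psi>_def)
    moreover have "\<psi> 1 = I + \<epsilon>" unfolding \<psi>_def f_def I_def
      by (subst integral_add[OF spi]) auto
    ultimately show False using I by (simp add: \<epsilon>_def)
  qed
  have G2b: "integral {0..1} sm \<le> 0"
  proof (rule ccontr)
    define I where "I = integral {0..1} sm"
    assume "\<not> integral {0..1} sm \<le> 0"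
    then have I: "I > 0" by (simp add: I_def)
    define \<epsilon> where "\<epsilon> = I / 2"
    define f where "f x = sm x - \<epsilon>" for x
    have fc: "continuous_on {0..1} f" unfolding f_def by (intro continuous_intros smc)
    have gc: "continuous_on {0..1} (\<lambda>x. H x (f x))" by (rule Hcont_comp[OF cont fc])
    obtain x1 where x1: "x1 \<in> {0..1}" and x1m: "\<forall>x\<in>{0..1}. H x1 (f x1) \<le> H x (f x)"
      using continuous_attains_inf[OF _ _ gc] by auto
    define a' where "a' = H x1 (f x1)"
    have "a' > c" unfolding a'_def using sm_lt[OF x1] I by (simp add: f_def \<epsilon>_def)
    then have "Inf A < a'" using cA by simp
    then obtain a where aA: "a \<in> A" and aa: "a < a'" using cInf_less_iff[OF Ane Abdd] by blast
    obtain u where u: "periodic_subsol H a u" using aA unfolding A_def by blast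
    have hyp: "\<forall>r\<in>{0<..<1}. \<forall>q. q \<le> f r \<longrightarrow> a < H r q"
    proof (intro ballI allI impI)
      fix r q assume r: "r \<in> {0<..<1}" and q: "q \<le> f r"
      then have r01: "r \<in> {0..1}" by auto
      have ge: "H r q \<ge> H r (f r)"
      proof (rule ccontr)
        assume "\<not> ?thesis"
        then have lt: "H r q < H r (f r)" by simp
        have "q < sm r" using q I by (simp add: f_def \<epsilon>_def)
        then have "H r q > c" using sm_lt[OF r01] by blast
        then have "H r (sm r) \<le> H r q" using Hsm[OF r01] by simp
        then have "H r (f r) \<le> H r q" using cvx[OF r01, where p="f r" and b="H r q" and x=q and y="sm r"] q I
          by (simp add: f_def \<epsilon>_def)
        then show False using lt by simp
      qed
      moreover have "H x1 (f x1) \<le> H r (f r)" using x1m r01 by blast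
      ultimately show "a < H r q" using aa by (simp add: a'_def)
    qed
    define \<psi> where "\<psi> x = integral {0..x} f" for x
    have "u 1 - \<psi> 1 \<ge> u 0 - \<psi> 0"
    proof (rule Lminus[of u H a \<psi> f])
      show "continuous_on {0..1} u" "visc_subsol H a u" using u by (auto simp: periodic_subsol_def)
      show "continuous_on {0..1} \<psi>" unfolding \<psi>_def
        by (rule indefinite_integral_continuous_1) (rule integrable_continuous_interval[OF fc])
      show "\<forall>x\<in>{0<..<1}. (\<psi> has_real_derivative f x) (at x)" unfolding \<psi>_def using FTC01[OF fc] by blast
      show "continuous_on {0<..<1} f" using fc by (rule continuous_on_subset) auto
      show "\<forall>r\<in>{0<..<1}. \<forall>q. q \<le> f r \<longrightarrow> a < H r q" by (rule hyp)
    qed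
    then have "\<psi> 1 \<le> 0" using u by (simp add: periodic_subsol_def \<psi>_def)
    moreover have "\<psi> 1 = I - \<epsilon>" unfolding \<psi>_def f_def I_def
      by (subst integral_diff[OF smi]) auto
    ultimately show False using I by (simp add: \<epsilon>_def)
  qed
  have G3: "integral {0..1} sm = 0 \<or> integral {0..1} sp = 0"
  proof (cases "\<forall>s\<in>{0..1}. \<forall>p. c \<le> H s p")
    case True
    have "sm s = sp s" if s: "s \<in> {0..1}" for s
    proof -
      have "{sm s<..<sp s} = interior {p. H s p \<le> c}" using Qeq[OF s] by simp
      also have "\<dots> = {p. H s p < c}" using int_cond s by blast
      also have "\<dots> = {}" using True s by (auto simp: not_less)
      finally have "\<not> sm s < sp s" by auto
      moreover have "sm s \<le> sp s" using Qeq[OF s] Hsm[OF s] by auto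
      ultimately show ?thesis by simp
    qed
    then have "integral {0..1} sm = integral {0..1} sp" by (rule integral_cong)
    then show ?thesis using G2a G2b by simp
  next
    case False
    then have lt_ex: "\<forall>s\<in>{0..1}. \<exists>p. H s p < c" using main by blast
    have Lt: "H s p < c \<longleftrightarrow> sm s < p \<and> p < sp s" if s: "s \<in> {0..1}" for s p
    proof -
      have "{sm s<..<sp s} = interior {p. H s p \<le> c}" using Qeq[OF s] by simp
      also have "\<dots> = {p. H s p < c}" using int_cond s by blast
      finally show ?thesis by auto
    qed
    show ?thesis
    proof (rule ccontr)
      define Sm where "Sm = integral {0..1} sm"
      define Sp where "Sp = integral {0..1} sp"
      assume "\<not> ?thesis"
      then have Sm: "Sm < 0" and Sp: "Sp > 0" using G2a G2b by (auto simp: Sm_def Sp_def)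
      define \<theta> where "\<theta> = - Sm / (Sp - Sm)"
      have dp: "Sp - Sm > 0" using Sm Sp by simp
      have th1: "0 < \<theta>" unfolding \<theta>_def by (rule divide_pos_pos) (use Sm dp in auto)
      have th2: "\<theta> < 1" unfolding \<theta>_def by (subst divide_less_eq_1_pos[OF dp]) (use Sp in simp)
      note th = th1 th2
      have thd: "\<theta> * (Sp - Sm) = - Sm" using Sm Sp unfolding \<theta>_def by simp
      define f where "f x = \<theta> * sp x + (1 - \<theta>) * sm x" for x
      have fc: "continuous_on {0..1} f" unfolding f_def by (intro continuous_intros spc smc)
      have "integral {0..1} f = \<theta> * Sp + (1 - \<theta>) * Sm" unfolding f_def Sp_def Sm_def
      proof -
        have i1: "(\<lambda>x. \<theta> * sp x) integrable_on {0..1}" using integrable_cmul[OF spi, of \<theta>] by simp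
        have i2: "(\<lambda>x. (1 - \<theta>) * sm x) integrable_on {0..1}" using integrable_cmul[OF smi, of "1-\<theta>"] by simp
        show "integral {0..1} (\<lambda>x. \<theta> * sp x + (1 - \<theta>) * sm x) = \<theta> * integral {0..1} sp + (1 - \<theta>) * integral {0..1} sm"
          by (simp only: integral_add[OF i1 i2] integral_mult[OF spi, symmetric] integral_mult[OF smi, symmetric])
      qed
      also have "\<dots> = \<theta> * (Sp - Sm) + Sm" by (simp add: algebra_simps)
      also have "\<dots> = 0" using thd by simp
      finally have fi: "integral {0..1} f = 0" .
      have fl: "H s (f s) < c" if s: "s \<in> {0..1}" for s
      proof -
        obtain p where "H s p < c" using lt_ex s by blast
        then have "sm s < sp s" using Lt[OF s] by auto
        moreover have "f s - sm s = \<theta> * (sp s - sm s)" "sp s - f s = (1 - \<theta>) * (sp s - sm s)"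
          by (simp_all add: f_def algebra_simps)
        ultimately have "f s - sm s > 0" "sp s - f s > 0" using th by simp_all
        then have "sm s < f s \<and> f s < sp s" by simp
        then show ?thesis using Lt[OF s] by blast
      qed
      have gc: "continuous_on {0..1} (\<lambda>x. H x (f x))" by (rule Hcont_comp[OF cont fc])
      obtain x2 where x2: "x2 \<in> {0..1}" and x2m: "\<forall>x\<in>{0..1}. H x (f x) \<le> H x2 (f x2)"
        using continuous_attains_sup[OF _ _ gc] by auto
      have "periodic_subsol H (H x2 (f x2)) (\<lambda>x. integral {0..x} f)"
        by (rule Cons_sub[OF fc fi]) (use x2m in auto)
      then have "H x2 (f x2) \<in> A" unfolding A_def by blast
      then have "c \<le> H x2 (f x2)" unfolding cA by (rule cInf_lower[OF _ Abdd])
      then show False using fl[OF x2] by simp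
    qed
  qed
  have "min (- integral {0..1} sm) (integral {0..1} sp) = 0"
    using G2a G2b G3 by (auto simp: min_def)
  then show ?thesis by (simp add: sm_def sp_def c_def)
qed

end
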